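(* For all positive integers $N_1,N_2,q,r$ with $q> r\geq 1$, we have $f_{q,r}(N_1)f_{q,r}(N_2)\geq f_{q,r}(N_1N_2)$.
   Context: For a $q$-edge-colored complete graph $K$ on vertex set $[N]$ with its natural order, $f_{q,r}(K)$ is the maximum number of vertices of a monotone path (vertices strictly increasing in traversal order) in $K$ whose edges use at most $r$ colors; $f_{q,r}(N)$ is the minimum of $f_{q,r}(K)$ over all such $q$-edge-colored $K$ on $N$ vertices. *)

theory Defs
  imports Main
begin

text \<open>A q-edge-coloring of the complete graph on vertex set [N] = {1..N}:
  the edge {i,j} with i < j receives colour c i j, colours are taken from {0..<q}.\<close>
definition edge_coloring :: "nat \<Rightarrow> nat \<Rightarrow> (nat \<Rightarrow> nat \<Rightarrow> nat) \<Rightarrow> bool" where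
  "edge_coloring q N c \<longleftrightarrow> (\<forall>i j. 1 \<le> i \<and> i < j \<and> j \<le> N \<longrightarrow> c i j < q)"

definition path_colors :: "(nat \<Rightarrow> nat \<Rightarrow> nat) \<Rightarrow> nat list \<Rightarrow> nat set" where
  "path_colors c vs = {c (vs ! k) (vs ! Suc k) | k. Suc k < length vs}"

definition good_path :: "nat \<Rightarrow> nat \<Rightarrow> (nat \<Rightarrow> nat \<Rightarrow> nat) \<Rightarrow> nat list \<Rightarrow> bool" where
  "good_path N r c vs \<longleftrightarrow> sorted_wrt (<) vs \<and> set vs \<subseteq> {1..N} \<and> card (path_colors c vs) \<le> r"

definition f_K :: "nat \<Rightarrow> nat \<Rightarrow> (nat \<Rightarrow> nat \<Rightarrow> nat) \<Rightarrow> nat" where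
  "f_K N r c = Max (length ` {vs. good_path N r c vs})"

definition f_qr :: "nat \<Rightarrow> nat \<Rightarrow> nat \<Rightarrow> nat" where
  "f_qr q r N = Min ((\<lambda>c. f_K N r c) ` {c. edge_coloring q N c})"

end

theory Submission
  imports Defs
begin

fun pc :: "(nat \<Rightarrow> nat \<Rightarrow> nat) \<Rightarrow> nat list \<Rightarrow> nat set" where
  "pc c (x#y#zs) = insert (c x y) (pc c (y#zs))"
| "pc c _ = {}"

lemma path_colors_pc: "path_colors c vs = pc c vs"
proof (induction c vs rule: pc.induct)
  case (1 c x y zs)
  have "path_colors c (x#y#zs) = insert (c x y) (path_colors c (y#zs))"
    unfolding path_colors_def
  proof (rule set_eqI, rule iffI)
    fix a assume "a \<in> {c ((x # y # zs) ! k) ((x # y # zs) ! Suc k) |k. Suc k < length (x # y # zs)}"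
    then obtain k where k: "a = c ((x # y # zs) ! k) ((x # y # zs) ! Suc k)" "Suc k < length (x # y # zs)" by blast
    show "a \<in> insert (c x y) {c ((y # zs) ! k) ((y # zs) ! Suc k) |k. Suc k < length (y # zs)}"
    proof (cases k)
      case 0 then show ?thesis using k by simp
    next
      case (Suc m) then show ?thesis using k by auto
    qed
  next
    fix a assume "a \<in> insert (c x y) {c ((y # zs) ! k) ((y # zs) ! Suc k) |k. Suc k < length (y # zs)}"
    then show "a \<in> {c ((x # y # zs) ! k) ((x # y # zs) ! Suc k) |k. Suc k < length (x # y # zs)}"
    proof
      assume "a = c x y" then show ?thesis by (intro CollectI exI[of _ 0]) auto
    next
      assume "a \<in> {c ((y # zs) ! k) ((y # zs) ! Suc k) |k. Suc k < length (y # zs)}"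
      then obtain k where k: "a = c ((y # zs) ! k) ((y # zs) ! Suc k)" "Suc k < length (y # zs)" by blast
      then show ?thesis by (intro CollectI exI[of _ "Suc k"]) auto
    qed
  qed
  then show ?case using 1 by simp
next
  case ("2_1" c) then show ?case by (simp add: path_colors_def)
next
  case ("2_2" c v) then show ?case by (simp add: path_colors_def)
qed

lemma pc_finite: "finite (pc c vs)"
  by (induction c vs rule: pc.induct) auto

lemma good_len: "good_path N r c vs \<Longrightarrow> length vs \<le> N"
proof -
  assume g: "good_path N r c vs"
  then have d: "distinct vs" unfolding good_path_def using strict_sorted_iff by blast
  have "card (set vs) \<le> card {1..N}" using g unfolding good_path_def by (intro card_mono) auto
  then show ?thesis using distinct_card[OF d] by simp
qed

lemma fK_fin: "finite (length ` {vs. good_path N r c vs})"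
  by (rule finite_subset[of _ "{0..N}"]) (auto dest: good_len)

lemma good_nil: "good_path N r c []"
  by (simp add: good_path_def path_colors_def)

lemma fK_ge: "good_path N r c vs \<Longrightarrow> length vs \<le> f_K N r c"
  unfolding f_K_def using fK_fin by (intro Max_ge) auto

lemma fK_attained: "\<exists>vs. good_path N r c vs \<and> length vs = f_K N r c"
proof -
  have "f_K N r c \<in> length ` {vs. good_path N r c vs}"
    unfolding f_K_def using fK_fin good_nil[of N r c] by (intro Max_in) auto
  then show ?thesis by auto
qed

lemma fK_le_N: "f_K N r c \<le> N"
  using fK_attained good_len by metis

lemma fqr_fin: "finite ((\<lambda>c. f_K N r c) ` {c. edge_coloring q N c})"
  by (rule finite_subset[of _ "{0..N}"]) (auto intro: fK_le_N)

lemma fqr_le: "edge_coloring q N c \<Longrightarrow> f_qr q r N \<le> f_K N r c"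
  unfolding f_qr_def using fqr_fin by (intro Min_le) auto

lemma fqr_attained:
  assumes "q > 0"
  shows "\<exists>c. edge_coloring q N c \<and> f_qr q r N = f_K N r c"
proof -
  have "edge_coloring q N (\<lambda>_ _. 0)" using assms by (simp add: edge_coloring_def)
  then have "f_qr q r N \<in> (\<lambda>c. f_K N r c) ` {c. edge_coloring q N c}"
    unfolding f_qr_def using fqr_fin by (intro Min_in) auto
  then show ?thesis by auto
qed

definition blk :: "nat \<Rightarrow> nat \<Rightarrow> nat" where "blk n v = (v - 1) div n + 1"
definition pos :: "nat \<Rightarrow> nat \<Rightarrow> nat" where "pos n v = (v - 1) mod n + 1"

definition cc :: "nat \<Rightarrow> (nat \<Rightarrow> nat \<Rightarrow> nat) \<Rightarrow> (nat \<Rightarrow> nat \<Rightarrow> nat) \<Rightarrow> nat \<Rightarrow> nat \<Rightarrow> nat" where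
  "cc n c1 c2 i j = (if blk n i = blk n j then c2 (pos n i) (pos n j) else c1 (blk n i) (blk n j))"

lemma blk_mono: "i \<le> j \<Longrightarrow> blk n i \<le> blk n j"
  unfolding blk_def by (simp add: div_le_mono)

lemma pos_less: "blk n i = blk n j \<Longrightarrow> i < j \<Longrightarrow> 1 \<le> i \<Longrightarrow> pos n i < pos n j"
proof -
  assume "blk n i = blk n j" "i < j" "1 \<le> i"
  then have e: "(i - 1) div n = (j - 1) div n" and l: "i - 1 < j - 1" unfolding blk_def by auto
  have "i - 1 = n * ((i - 1) div n) + (i - 1) mod n" by simp
  moreover have "j - 1 = n * ((j - 1) div n) + (j - 1) mod n" by simp
  moreover have "n * ((i - 1) div n) = n * ((j - 1) div n)" using e by simp
  ultimately have "(i - 1) mod n < (j - 1) mod n" using l by linarith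
  then show ?thesis unfolding pos_def by simp
qed

lemma pos_range: "0 < n \<Longrightarrow> pos n v \<in> {1..n}"
  unfolding pos_def by (simp add: Suc_leI)

lemma blk_range: "1 \<le> v \<Longrightarrow> v \<le> N1 * n \<Longrightarrow> blk n v \<in> {1..N1}"
proof -
  assume "1 \<le> v" "v \<le> N1 * n"
  then have "v - 1 < N1 * n" by simp
  then have "(v - 1) div n < N1"
    by (metis div_less_iff_less_mult mult.commute mult_zero_right not_gr_zero not_less_zero)
  then show ?thesis unfolding blk_def by simp
qed

lemma cc_coloring:
  assumes "edge_coloring q N1 c1" "edge_coloring q n c2" "0 < n"
  shows "edge_coloring q (N1 * n) (cc n c1 c2)"
  unfolding edge_coloring_def
proof (intro allI impI)
  fix i j assume h: "1 \<le> i \<and> i < j \<and> j \<le> N1 * n"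
  show "cc n c1 c2 i j < q"
  proof (cases "blk n i = blk n j")
    case True
    then have "pos n i < pos n j" using h pos_less by blast
    then show ?thesis using True assms pos_range[of n i] pos_range[of n j]
      unfolding cc_def edge_coloring_def by auto
  next
    case False
    then have "blk n i < blk n j" using blk_mono[of i j n] h by simp
    then show ?thesis using False assms blk_range[of i N1 n] blk_range[of j N1 n] h
      unfolding cc_def edge_coloring_def by auto
  qed
qed

fun bl :: "nat \<Rightarrow> nat list \<Rightarrow> nat list" where
  "bl n [] = []"
| "bl n [x] = [blk n x]"
| "bl n (x#y#zs) = (if blk n x = blk n y then bl n (y#zs) else blk n x # bl n (y#zs))"

fun run :: "nat \<Rightarrow> nat list \<Rightarrow> nat list" where
  "run n [] = []"
| "run n [x] = [x]"
| "run n (x#y#zs) = (if blk n x = blk n y then x # run n (y#zs) else [x])"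

lemma bl_hd: "\<exists>t. bl n (y#zs) = blk n y # t"
  by (induction n "y#zs" arbitrary: y zs rule: bl.induct) auto

lemma bl_set: "set (bl n vs) = blk n ` set vs"
proof (induction n vs rule: bl.induct)
  case (3 n x y zs)
  obtain t where "bl n (y#zs) = blk n y # t" using bl_hd by blast
  then show ?case using 3 by (auto split: if_splits)
qed auto

lemma bl_sorted: "sorted_wrt (<) vs \<Longrightarrow> sorted_wrt (<) (bl n vs)"
proof (induction n vs rule: bl.induct)
  case (3 n x y zs)
  have IH: "sorted_wrt (<) (bl n (y#zs))" using 3 by (cases "blk n x = blk n y") auto
  show ?case
  proof (cases "blk n x = blk n y")
    case True then show ?thesis using IH by simp
  next
    case False
    have "blk n x < b" if hb: "b \<in> set (bl n (y#zs))" for b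
    proof -
      have "b \<in> blk n ` set (y#zs)" using hb bl_set[of n "y#zs"] by simp
      then obtain v where v: "v \<in> set (y#zs)" "b = blk n v" by blast
      have "y \<le> v" using v "3.prems" by auto
      then have "blk n y \<le> b" using v(2) blk_mono[of y v n] by simp
      moreover have "blk n x \<le> blk n y" using "3.prems" blk_mono[of x y n] by simp
      ultimately show ?thesis using False by simp
    qed
    then show ?thesis using False IH by simp
  qed
qed auto

lemma bl_pc: "pc c1 (bl n vs) \<subseteq> pc (cc n c1 c2) vs"
proof (induction n vs rule: bl.induct)
  case (3 n x y zs)
  obtain t where t: "bl n (y#zs) = blk n y # t" using bl_hd by blast
  show ?case
  proof (cases "blk n x = blk n y")
    case True then show ?thesis using 3 by auto
  next
    case False
    then show ?thesis using 3 t by (auto simp: cc_def)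
  qed
qed auto


lemma run_hd: "\<exists>t. run n (y#zs) = y # t"
  by (cases zs) auto

lemma run_pc: "pc (cc n c1 c2) (run n vs) \<subseteq> pc (cc n c1 c2) vs"
proof (induction n vs rule: run.induct)
  case (3 n x y zs)
  obtain t where t: "run n (y#zs) = y # t" using run_hd by blast
  show ?case using 3 t by auto
qed auto

lemma pc_Cons: "pc c ws \<subseteq> pc c (x#ws)"
  by (cases ws) auto

lemma pc_drop: "pc c (drop k vs) \<subseteq> pc c vs"
proof (induction k arbitrary: vs)
  case (Suc k)
  show ?case
  proof (cases vs)
    case Nil then show ?thesis by simp
  next
    case (Cons a l)
    then show ?thesis using Suc.IH[of l] pc_Cons[of c l a] by auto
  qed
qed simp

lemma run_set: "set (run n vs) \<subseteq> set vs"
  by (induction n vs rule: run.induct) auto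

lemma run_blk: "v \<in> set (run n (x#zs)) \<Longrightarrow> blk n v = blk n x"
  by (induction n "x#zs" arbitrary: x zs rule: run.induct) (auto split: if_splits)

lemma run_sorted: "sorted_wrt (<) vs \<Longrightarrow> set vs \<subseteq> {1..} \<Longrightarrow> sorted_wrt (<) (map (pos n) (run n vs))"
proof (induction n vs rule: run.induct)
  case (3 n x y zs)
  show ?case
  proof (cases "blk n x = blk n y")
    case True
    have "pos n x < pos n v" if "v \<in> set (run n (y#zs))" for v
    proof -
      have "v \<in> set (y#zs)" using that run_set by blast
      then have "x < v" using "3.prems" by auto
      moreover have "blk n v = blk n x" using that run_blk True by simp
      ultimately show ?thesis using pos_less "3.prems" by force
    qed
    then show ?thesis using True 3 by auto
  next
    case False then show ?thesis by simp
  qed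
qed auto

lemma run_pc2: "pc (cc n c1 c2) (run n vs) = pc c2 (map (pos n) (run n vs))"
proof (induction n vs rule: run.induct)
  case (3 n x y zs)
  show ?case
  proof (cases "blk n x = blk n y")
    case True
    obtain t where t: "run n (y#zs) = y # t" using run_hd by blast
    have IH: "pc (cc n c1 c2) (y # t) = pc c2 (map (pos n) (y # t))" using 3 True t by simp
    have "pc (cc n c1 c2) (run n (x#y#zs)) = insert (cc n c1 c2 x y) (pc (cc n c1 c2) (y # t))"
      using True t by simp
    also have "\<dots> = insert (c2 (pos n x) (pos n y)) (pc c2 (map (pos n) (y # t)))"
      using IH True by (simp add: cc_def)
    also have "\<dots> = pc c2 (map (pos n) (run n (x#y#zs)))" using True t by simp
    finally show ?thesis .
  next
    case False then show ?thesis by simp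
  qed
qed auto

lemma run_len: "length (run n (x#zs)) \<ge> 1"
  by (cases zs) auto

lemma main_ind:
  assumes "sorted_wrt (<) vs" "set vs \<subseteq> {1..}" "vs \<noteq> []"
    "\<And>k. length (run n (drop k vs)) \<le> F"
  shows "length vs + F \<le> F * length (bl n vs) + length (run n vs)"
  using assms
proof (induction n vs rule: bl.induct)
  case (3 n x y zs)
  have h: "length (run n (drop k (y#zs))) \<le> F" for k
    using "3.prems"(4)[of "Suc k"] by simp
  have IH: "length (y#zs) + F \<le> F * length (bl n (y#zs)) + length (run n (y#zs))"
    using "3.IH" "3.prems" h by (cases "blk n x = blk n y") auto
  show ?case
  proof (cases "blk n x = blk n y")
    case True then show ?thesis using IH by simp
  next
    case False
    have "length (run n (y#zs)) \<le> F" using h[of 0] by simp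
    then show ?thesis using IH False by simp
  qed
qed auto

theorem corollary3p4:
  fixes N1 N2 q r :: nat
  assumes "N1 \<ge> 1" and "N2 \<ge> 1" and "r \<ge> 1" and "q > r"
  shows "f_qr q r N1 * f_qr q r N2 \<ge> f_qr q r (N1 * N2)"
proof -
  have q0: "q > 0" using assms by simp
  obtain c1 where c1: "edge_coloring q N1 c1" "f_qr q r N1 = f_K N1 r c1"
    using fqr_attained[OF q0] by blast
  obtain c2 where c2: "edge_coloring q N2 c2" "f_qr q r N2 = f_K N2 r c2"
    using fqr_attained[OF q0] by blast
  define C where "C = cc N2 c1 c2"
  have colC: "edge_coloring q (N1 * N2) C"
    unfolding C_def using cc_coloring c1(1) c2(1) assms(2) by simp
  obtain vs where vs: "good_path (N1 * N2) r C vs" "length vs = f_K (N1 * N2) r C"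
    using fK_attained by blast
  have sv: "sorted_wrt (<) vs" and rv: "set vs \<subseteq> {1..N1 * N2}"
    and cv: "card (pc C vs) \<le> r"
    using vs(1) unfolding good_path_def path_colors_pc by auto
  have "length vs \<le> f_K N1 r c1 * f_K N2 r c2"
  proof (cases "vs = []")
    case True then show ?thesis by simp
  next
    case False
    have runk: "length (run N2 (drop k vs)) \<le> f_K N2 r c2" for k
    proof -
      let ?ws = "map (pos N2) (run N2 (drop k vs))"
      have d1: "sorted_wrt (<) (drop k vs)" using sv by (rule sorted_wrt_drop)
      have d2: "set (drop k vs) \<subseteq> {1..}" using rv set_drop_subset[of k vs] by auto
      have s1: "sorted_wrt (<) ?ws" by (rule run_sorted[OF d1 d2])
      have s2: "set ?ws \<subseteq> {1..N2}" using pos_range assms(2) by auto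
      have "pc c2 ?ws = pc C (run N2 (drop k vs))" unfolding C_def using run_pc2 by simp
      also have "\<dots> \<subseteq> pc C (drop k vs)" unfolding C_def by (rule run_pc)
      also have "\<dots> \<subseteq> pc C vs" by (rule pc_drop)
      finally have "card (pc c2 ?ws) \<le> card (pc C vs)" by (intro card_mono pc_finite)
      then have "card (pc c2 ?ws) \<le> r" using cv by simp
      then have "good_path N2 r c2 ?ws" using s1 s2 unfolding good_path_def path_colors_pc by simp
      then have "length ?ws \<le> f_K N2 r c2" by (rule fK_ge)
      then show ?thesis by simp
    qed
    have m: "length vs + f_K N2 r c2 \<le> f_K N2 r c2 * length (bl N2 vs) + length (run N2 vs)"
    proof -
      have "set vs \<subseteq> {1..}" using rv by auto
      then show ?thesis using main_ind[of vs N2 "f_K N2 r c2", OF sv _ False runk] by blast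
    qed
    have r0: "length (run N2 vs) \<le> f_K N2 r c2" using runk[of 0] by simp
    have "good_path N1 r c1 (bl N2 vs)"
    proof -
      have g1: "sorted_wrt (<) (bl N2 vs)" using bl_sorted sv by blast
      have g2: "set (bl N2 vs) \<subseteq> {1..N1}"
      proof
        fix b assume "b \<in> set (bl N2 vs)"
        then obtain v where "v \<in> set vs" "b = blk N2 v" using bl_set[of N2 vs] by auto
        then show "b \<in> {1..N1}" using blk_range[of v N1 N2] rv by auto
      qed
      have "card (pc c1 (bl N2 vs)) \<le> card (pc C vs)"
        unfolding C_def by (intro card_mono pc_finite bl_pc)
      then have "card (pc c1 (bl N2 vs)) \<le> r" using cv by simp
      then show ?thesis using g1 g2 unfolding good_path_def path_colors_pc by simp
    qed
    then have "length (bl N2 vs) \<le> f_K N1 r c1" by (rule fK_ge)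
    then have A: "f_K N2 r c2 * length (bl N2 vs) \<le> f_K N2 r c2 * f_K N1 r c1"
      by (rule mult_le_mono2)
    have "length vs \<le> f_K N2 r c2 * f_K N1 r c1" using m r0 A by linarith
    then show ?thesis by (simp add: mult.commute)
  qed
  moreover have "f_qr q r (N1 * N2) \<le> f_K (N1 * N2) r C" using fqr_le colC by blast
  ultimately show ?thesis using c1 c2 vs by simp
qed

end
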